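(* Let $R>0$ and let $\mathbf L\colon\mathbb R^n\times\mathbb R^m\to\mathbb R$ be an $R$-smooth convex-concave function with a saddle point $\mathbf z^\star$. Let $\alpha_0=\frac{0.618}{R}$, $\alpha_{k+1}=\alpha_k\left(1-\frac{1}{(k+1)(k+3)}\frac{\alpha_k^2R^2}{1-\alpha_k^2R^2}\right)$ for $k\ge0$, let $\mathbf z^0\in\mathbb R^n\times\mathbb R^m$, and define $$\mathbf z^{k+1/2}=\mathbf z^k+\tfrac{1}{k+2}(\mathbf z^0-\mathbf z^k)-\alpha_k\mathbf G(\mathbf z^k),\qquad \mathbf z^{k+1}=\mathbf z^k+\tfrac{1}{k+2}(\mathbf z^0-\mathbf z^k)-\alpha_k\mathbf G(\mathbf z^{k+1/2}),\quad k\ge0.$$ Then for all $k\ge0$, $$\|\nabla\mathbf L(\mathbf z^k)\|^2\le\frac{27R^2\|\mathbf z^0-\mathbf z^\star\|^2}{(k+1)(k+2)}.$$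
   Context: Write $\mathbf z=(\mathbf x,\mathbf y)$. $\mathbf L$ convex-concave: convex in $\mathbf x$ for fixed $\mathbf y$, concave in $\mathbf y$ for fixed $\mathbf x$. A saddle point $(\mathbf x^\star,\mathbf y^\star)$ satisfies $\mathbf L(\mathbf x^\star,\mathbf y)\le\mathbf L(\mathbf x^\star,\mathbf y^\star)\le\mathbf L(\mathbf x,\mathbf y^\star)$ for all $\mathbf x,\mathbf y$. $\mathbf G(\mathbf z)=(\nabla_{\mathbf x}\mathbf L(\mathbf x,\mathbf y),-\nabla_{\mathbf y}\mathbf L(\mathbf x,\mathbf y))$; $\mathbf L$ is $R$-smooth if it is differentiable and $\mathbf G$ is $R$-Lipschitz. *)

theory Defs
  imports "HOL-Analysis.Analysis"
begin

definition grad :: "('a::euclidean_space \<Rightarrow> real) \<Rightarrow> 'a \<Rightarrow> 'a" where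
  "grad f x = (THE g. (f has_derivative (\<lambda>h. g \<bullet> h)) (at x))"

definition grad_x :: "('a::euclidean_space \<times> 'b::euclidean_space \<Rightarrow> real) \<Rightarrow> 'a \<times> 'b \<Rightarrow> 'a" where
  "grad_x L z = grad (\<lambda>x. L (x, snd z)) (fst z)"

definition grad_y :: "('a::euclidean_space \<times> 'b::euclidean_space \<Rightarrow> real) \<Rightarrow> 'a \<times> 'b \<Rightarrow> 'b" where
  "grad_y L z = grad (\<lambda>y. L (fst z, y)) (snd z)"

definition saddle_op :: "('a::euclidean_space \<times> 'b::euclidean_space \<Rightarrow> real) \<Rightarrow> 'a \<times> 'b \<Rightarrow> 'a \<times> 'b" where
  "saddle_op L z = (grad_x L z, - grad_y L z)"

definition convex_concave :: "('a::euclidean_space \<times> 'b::euclidean_space \<Rightarrow> real) \<Rightarrow> bool" where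
  "convex_concave L \<longleftrightarrow> (\<forall>y. convex_on UNIV (\<lambda>x. L (x, y))) \<and> (\<forall>x. concave_on UNIV (\<lambda>y. L (x, y)))"

definition is_saddle_point :: "('a \<times> 'b \<Rightarrow> real) \<Rightarrow> 'a \<times> 'b \<Rightarrow> bool" where
  "is_saddle_point L zs \<longleftrightarrow>
     (\<forall>x y. L (fst zs, y) \<le> L zs \<and> L zs \<le> L (x, snd zs))"

definition smooth_cc :: "real \<Rightarrow> ('a::euclidean_space \<times> 'b::euclidean_space \<Rightarrow> real) \<Rightarrow> bool" where
  "smooth_cc R L \<longleftrightarrow> (\<forall>z. L differentiable (at z)) \<and> R-lipschitz_on UNIV (saddle_op L)"

end

theory Submission
  imports Defs
begin


lemma sq_lt1: "0 \<le> x \<Longrightarrow> x < 1 \<Longrightarrow> x^2 < (1::real)"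
  by (metis power_strict_mono one_power2 zero_less_numeral)

lemma step_bounds:
  fixes l a u d :: real
  assumes "0 < l" "l \<le> a" "a \<le> u" "u < 1" "u^2/(1-u^2) \<le> d"
  shows "l*(1 - 1/d*(u^2/(1-u^2))) \<le> a*(1 - 1/d*(a^2/(1-a^2)))"
    and "a*(1 - 1/d*(a^2/(1-a^2))) \<le> u*(1 - 1/d*(l^2/(1-l^2)))"
proof -
  have mono: "x^2/(1-x^2) \<le> y^2/(1-y^2)" if "0 \<le> x" "x \<le> y" "y < 1" for x y :: real
  proof -
    have "x^2 \<le> y^2" using that by (simp add: power_mono)
    moreover have "y^2 < 1" using that sq_lt1 by simp
    ultimately show ?thesis using that
      by (intro frac_le) auto
  qed
  have l1: "l^2 < 1" using assms sq_lt1 by simp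
  have u1: "u^2 < 1" using assms sq_lt1 by simp
  have gl0: "0 \<le> l^2/(1-l^2)" using l1 by simp
  have ga: "a^2/(1-a^2) \<le> u^2/(1-u^2)" using mono[of a u] assms by simp
  have gl: "l^2/(1-l^2) \<le> a^2/(1-a^2)" using mono[of l a] assms by simp
  have d: "d > 0"
  proof -
    have "0 < u^2" using assms by simp
    then have "0 < u^2/(1-u^2)" using u1 by simp
    then show ?thesis using assms by linarith
  qed
  have "1/d*(a^2/(1-a^2)) \<le> 1/d*(u^2/(1-u^2))" using d by (intro mult_left_mono[OF ga]) simp
  then have f1: "1 - 1/d*(u^2/(1-u^2)) \<le> 1 - 1/d*(a^2/(1-a^2))" by linarith
  have "1/d*(u^2/(1-u^2)) \<le> 1/d*d" using assms(5) d by (intro mult_left_mono) auto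
  then have f0: "0 \<le> 1 - 1/d*(u^2/(1-u^2))" using d by simp
  show "l*(1 - 1/d*(u^2/(1-u^2))) \<le> a*(1 - 1/d*(a^2/(1-a^2)))"
    using f0 f1 assms by (meson mult_mono less_imp_le order_trans)
  have "1/d*(l^2/(1-l^2)) \<le> 1/d*(a^2/(1-a^2))" using d by (intro mult_left_mono[OF gl]) simp
  then have f2: "1 - 1/d*(a^2/(1-a^2)) \<le> 1 - 1/d*(l^2/(1-l^2))" by linarith
  have f3: "0 \<le> 1 - 1/d*(a^2/(1-a^2))" using f0 f1 by linarith
  show "a*(1 - 1/d*(a^2/(1-a^2))) \<le> u*(1 - 1/d*(l^2/(1-l^2)))"
    using f2 f3 assms by (meson mult_mono order_trans less_imp_le)
qed


lemma gmono: "0 \<le> x \<Longrightarrow> x \<le> y \<Longrightarrow> y < 1 \<Longrightarrow> x^2/(1-x^2) \<le> y^2/(1-(y::real)^2)"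
proof -
  assume that: "0 \<le> x" "x \<le> y" "y < 1"
  have "x^2 \<le> y^2" using that by (simp add: power_mono)
  moreover have "y^2 < 1" using that sq_lt1 by simp
  ultimately show ?thesis using that
    by (intro frac_le) auto
qed

lemma step_num:
  fixes a :: "nat \<Rightarrow> real" and k m :: nat
  assumes aS: "a m = a k * (1 - 1 / ((real k + 1) * (real k + 3)) * (a k ^ 2 / (1 - a k ^ 2)))"
    and b: "l \<le> a k \<and> a k \<le> u" and "0 < l" "u < 1" "u^2/(1-u^2) \<le> (real k + 1) * (real k + 3)"
    and "l' \<le> l*(1 - 1/((real k + 1) * (real k + 3))*(u^2/(1-u^2)))"
    and "u*(1 - 1/((real k + 1) * (real k + 3))*(l^2/(1-l^2))) \<le> u'"
  shows "l' \<le> a m \<and> a m \<le> u'"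
  using step_bounds[of l "a k" u "(real k + 1) * (real k + 3)"] assms by auto

lemma tail_step:
  fixes K x lN uN c :: real
  assumes K: "K \<ge> 0" and x: "x \<le> uN" "x \<ge> lN*(1 - c*(Tz - 1/(2*(K+1)) - 1/(2*(K+2))))"
    and Tz: "Tz - 1/(2*(K+1)) - 1/(2*(K+2)) \<ge> 0" "c*Tz < 1"
    and pos: "lN > 0" "uN < 1" "uN^2/(1-uN^2) \<le> c" "c < 1" "c \<ge> 0"
  shows "x * (1 - 1/((K+1)*(K+3)) * (x^2/(1-x^2))) \<le> uN"
    and "x * (1 - 1/((K+1)*(K+3)) * (x^2/(1-x^2))) \<ge> lN*(1 - c*(Tz - 1/(2*(K+1+1)) - 1/(2*(K+1+2))))"
proof -
  define T where "T = Tz - 1/(2*(K+1)) - 1/(2*(K+2))"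
  define d where "d = (K+1)*(K+3)"
  have "d = K*K + 4*K + 3" unfolding d_def by (simp add: algebra_simps)
  moreover have "0 \<le> K*K" by simp
  ultimately have d1: "d \<ge> 1" using K by linarith
  have c0: "c \<ge> 0" using pos by simp
  have "1/(2*(K+1)) \<ge> 0" "1/(2*(K+2)) \<ge> 0" using K by simp_all
  then have Tz0: "T \<ge> 0" "T \<le> Tz" using Tz K unfolding T_def by linarith+
  have "c*T \<le> c*Tz" using Tz0 c0 by (intro mult_left_mono) auto
  then have lb: "lN*(1-c*T) > 0" using Tz pos by simp
  have x0: "x > 0" using x lb unfolding T_def by linarith
  have gx0: "x^2/(1-x^2) \<ge> 0" using x0 x pos sq_lt1[of x] by simp
  have gx: "x^2/(1-x^2) \<le> c" using gmono[of x uN] x0 x pos by linarith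
  have "1/d * (x^2/(1-x^2)) \<le> 1/d * c" using gx d1 by (intro mult_left_mono) auto
  then have f: "1/d * (x^2/(1-x^2)) \<le> c/d" by simp
  have f0: "1/d * (x^2/(1-x^2)) \<ge> 0" using gx0 d1 by (intro mult_nonneg_nonneg) auto
  show "x * (1 - 1/((K+1)*(K+3)) * (x^2/(1-x^2))) \<le> uN"
  proof -
    have "x * (1/d * (x^2/(1-x^2))) \<ge> 0" by (rule mult_nonneg_nonneg[OF less_imp_le[OF x0] f0])
    then have "x * (1 - 1/d * (x^2/(1-x^2))) \<le> x" by (simp add: algebra_simps)
    then show ?thesis using x unfolding d_def by linarith
  qed
  have cd: "c/d \<le> 1" using d1 pos by simp
  have "x * (1 - 1/d * (x^2/(1-x^2))) \<ge> x * (1 - c/d)"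
    using f x0 by (intro mult_left_mono) auto
  moreover have "x * (1 - c/d) \<ge> lN*(1-c*T) * (1 - c/d)"
    using x cd unfolding T_def by (intro mult_right_mono) auto
  moreover have "lN*(1-c*T) * (1 - c/d) \<ge> lN*(1-c*T) - lN*(c/d)"
  proof -
    have "lN*(1-c*T) \<le> lN" using c0 Tz0 pos by (simp add: mult_nonneg_nonneg)
    then have "lN*(1-c*T)*(c/d) \<le> lN*(c/d)" using c0 d1 by (intro mult_right_mono) auto
    then show ?thesis by (simp add: algebra_simps)
  qed
  moreover have "lN*(1-c*T) - lN*(c/d) = lN*(1 - c*(Tz - 1/(2*(K+1+1)) - 1/(2*(K+1+2))))"
  proof -
    have e1: "K+1+1 = K+2" "K+1+2 = K+3" by simp_all
    have p: "K+1 > 0" "K+3 > 0" using K by simp_all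
    have "1/(2*(K+1)) - 1/(2*(K+3)) = (1*(2*(K+3)) - 1*(2*(K+1)))/((2*(K+1))*(2*(K+3)))"
      using p by (intro diff_frac_eq) auto
    also have "\<dots> = 4/(4*((K+1)*(K+3)))"
      by (rule arg_cong2[where f="(/)"]) (simp_all add: algebra_simps)
    also have "\<dots> = 1/((K+1)*(K+3))" by simp
    finally have "1/(2*(K+1)) - 1/(2*(K+3)) = 1/((K+1)*(K+3))" .
    then have tel: "1/d = 1/(2*(K+1)) + 1/(2*(K+2)) - 1/(2*(K+1+1)) - 1/(2*(K+1+2))"
      unfolding d_def e1 by simp
    have gen: "lN*(1-c*(Tz - p - q)) - lN*(c*(p + q - r - s)) = lN*(1 - c*(Tz - r - s))" for p q r s :: real
      by (simp add: algebra_simps)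
    have "c/d = c*(1/d)" by simp
    then show ?thesis unfolding T_def tel using gen by simp
  qed
  ultimately show "x * (1 - 1/((K+1)*(K+3)) * (x^2/(1-x^2))) \<ge> lN*(1 - c*(Tz - 1/(2*(K+1+1)) - 1/(2*(K+1+2))))"
    unfolding d_def by linarith
qed

lemma a_bounds:
  fixes a :: "nat \<Rightarrow> real"
  assumes a0: "a 0 = 618/1000"
    and aS: "\<And>k. a (Suc k) = a k * (1 - 1 / ((real k + 1) * (real k + 3)) * (a k ^ 2 / (1 - a k ^ 2)))"
  shows "435/1000 \<le> a k \<and> a k \<le> 618/1000"
proof -
  have aS': "\<And>k m. m = k+1 \<Longrightarrow> a m = a k * (1 - 1 / ((real k + 1) * (real k + 3)) * (a k ^ 2 / (1 - a k ^ 2)))"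
    using aS by auto
  have m1: "(1::nat) = 0+1" by simp
  have m2: "(2::nat) = 1+1" by simp
  have m3: "(3::nat) = 2+1" by simp
  have m4: "(4::nat) = 3+1" by simp
  have m5: "(5::nat) = 4+1" by simp
  have m6: "(6::nat) = 5+1" by simp
  have m7: "(7::nat) = 6+1" by simp
  have m8: "(8::nat) = 7+1" by simp
  have b0: "(309/500::real) \<le> a 0 \<and> a 0 \<le> (309/500::real)" using a0 by simp
  have b1: "(4907/10000::real) \<le> a 1 \<and> a 1 \<le> (1227/2500::real)"
    using step_num[OF aS'[OF m1] b0, of "(4907/10000::real)" "(1227/2500::real)"] by (simp add: power2_eq_square)
  have b2: "(589/1250::real) \<le> a 2 \<and> a 2 \<le> (2357/5000::real)"
    using step_num[OF aS'[OF m2] b1, of "(589/1250::real)" "(2357/5000::real)"] by (simp add: power2_eq_square)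
  have b3: "(2311/5000::real) \<le> a 3 \<and> a 3 \<le> (37/80::real)"
    using step_num[OF aS'[OF m3] b2, of "(2311/5000::real)" "(37/80::real)"] by (simp add: power2_eq_square)
  have b4: "(4569/10000::real) \<le> a 4 \<and> a 4 \<le> (4573/10000::real)"
    using step_num[OF aS'[OF m4] b3, of "(4569/10000::real)" "(4573/10000::real)"] by (simp add: power2_eq_square)
  have b5: "(2267/5000::real) \<le> a 5 \<and> a 5 \<le> (4539/10000::real)"
    using step_num[OF aS'[OF m5] b4, of "(2267/5000::real)" "(4539/10000::real)"] by (simp add: power2_eq_square)
  have b6: "(4509/10000::real) \<le> a 6 \<and> a 6 \<le> (903/2000::real)"
    using step_num[OF aS'[OF m6] b5, of "(4509/10000::real)" "(903/2000::real)"] by (simp add: power2_eq_square)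
  have b7: "(449/1000::real) \<le> a 7 \<and> a 7 \<le> (4497/10000::real)"
    using step_num[OF aS'[OF m7] b6, of "(449/1000::real)" "(4497/10000::real)"] by (simp add: power2_eq_square)
  have b8: "(179/400::real) \<le> a 8 \<and> a 8 \<le> (4483/10000::real)"
    using step_num[OF aS'[OF m8] b7, of "(179/400::real)" "(4483/10000::real)"] by (simp add: power2_eq_square)
  have tail: "a (8+j) \<le> (4483/10000::real) \<and> a (8+j) \<ge> (179/400::real)*(1 - (26/100)*(1/18 + 1/20 - 1/(2*(real (8+j)+1)) - 1/(2*(real (8+j)+2))))" for j
  proof (induction j)
    case 0
    then show ?case using b8 by simp
  next
    case (Suc j)
    have eq: "a (8 + Suc j) = a (8+j) * (1 - 1/((real (8+j)+1)*(real (8+j)+3)) * (a (8+j)^2/(1-a (8+j)^2)))"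
      using aS[of "8+j"] by simp
    have Tz: "1/18 + 1/20 - 1/(2*(real (8+j)+1)) - 1/(2*(real (8+j)+2)) \<ge> (0::real)"
      by (simp add: field_simps)
    have r: "real (8 + Suc j) = real (8+j) + 1" by simp
    from Suc.IH have ih1: "a (8+j) \<le> (4483/10000::real)"
      and ih2: "a (8+j) \<ge> (179/400::real)*(1 - (26/100)*(1/18 + 1/20 - 1/(2*(real (8+j)+1)) - 1/(2*(real (8+j)+2))))"
      by auto
    have s1: "(0::real) \<le> real (8+j)" by simp
    have s2: "(26/100::real)*(1/18+1/20) < 1" by simp
    have s3: "(0::real) < 179/400" by simp
    have s4: "(4483/10000::real) < 1" by simp
    have s5: "(4483/10000::real)^2/(1-(4483/10000)^2) \<le> 26/100" by (simp add: power2_eq_square)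
    have s6: "(26/100::real) < 1" by simp
    have s7: "(0::real) \<le> 26/100" by simp
    note ts = tail_step[where K="real (8+j)" and x="a (8+j)" and lN="179/400" and uN="4483/10000"
       and c="26/100" and Tz="1/18+1/20", OF s1 ih1 ih2 Tz s2 s3 s4 s5 s6 s7]
    show ?case unfolding eq r using ts by blast
  qed
  show ?thesis
  proof (cases "k \<le> 8")
    case True
    then have "k \<in> {0,1,2,3,4,5,6,7,8}" by auto
    then show ?thesis using b0 b1 b2 b3 b4 b5 b6 b7 b8 by auto
  next
    case False
    then obtain j where j: "k = 8 + j" by (metis add.commute le_add_diff_inverse2 nat_le_linear)
    define q where "q = 1/(2*(real (8+j)+1)) + 1/(2*(real (8+j)+2))"
    have q0: "q \<ge> (0::real)" unfolding q_def by simp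
    have "(179/400::real)*(1 - (26/100)*(1/18 + 1/20)) \<le> (179/400::real)*(1 - (26/100)*(1/18 + 1/20 - q))"
      using q0 by (simp add: algebra_simps)
    also have "\<dots> \<le> a k" using tail[of j] unfolding j q_def by (simp add: algebra_simps)
    finally have "a k \<ge> (179/400::real)*(1 - (26/100)*(1/18 + 1/20))" .
    moreover have "a k \<le> (4483/10000::real)" using tail[of j] j by simp
    ultimately show ?thesis by simp
  qed
qed



lemma lin_rep:
  fixes D :: "'a::euclidean_space \<Rightarrow> real"
  assumes "linear D"
  shows "D = (\<lambda>h. (\<Sum>b\<in>Basis. D b *\<^sub>R b) \<bullet> h)"
proof (rule ext)
  fix h :: 'a
  have "D h = D (\<Sum>b\<in>Basis. (h \<bullet> b) *\<^sub>R b)" by (simp add: euclidean_representation)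
  also have "\<dots> = (\<Sum>b\<in>Basis. D ((h \<bullet> b) *\<^sub>R b))" using linear_sum[OF assms] by (simp add: o_def)
  also have "\<dots> = (\<Sum>b\<in>Basis. (h \<bullet> b) * D b)" using linear_scale[OF assms] by simp
  also have "\<dots> = (\<Sum>b\<in>Basis. D b * (b \<bullet> h))" by (rule sum.cong) (simp_all add: inner_commute)
  also have "\<dots> = (\<Sum>b\<in>Basis. D b *\<^sub>R b) \<bullet> h" by (simp add: inner_sum_left)
  finally show "D h = (\<Sum>b\<in>Basis. D b *\<^sub>R b) \<bullet> h" .
qed

lemma grad_eq:
  fixes f :: "'a::euclidean_space \<Rightarrow> real"
  assumes "(f has_derivative (\<lambda>h. g \<bullet> h)) (at x)"
  shows "grad f x = g"
  unfolding grad_def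
proof (rule the_equality)
  show "(f has_derivative (\<lambda>h. g \<bullet> h)) (at x)" by fact
next
  fix g' assume "(f has_derivative (\<lambda>h. g' \<bullet> h)) (at x)"
  then have "(\<lambda>h. g' \<bullet> h) = (\<lambda>h. g \<bullet> h)" using assms by (rule has_derivative_unique)
  then have "g' \<bullet> (g' - g) = g \<bullet> (g' - g)" by metis
  then have "(g' - g) \<bullet> (g' - g) = 0" by (simp add: inner_diff_left)
  then show "g' = g" by simp
qed

lemma grad_works:
  fixes f :: "'a::euclidean_space \<Rightarrow> real"
  assumes "f differentiable (at x)"
  shows "(f has_derivative (\<lambda>h. grad f x \<bullet> h)) (at x)"
proof -
  obtain D where D: "(f has_derivative D) (at x)" using assms unfolding differentiable_def by blast
  have "linear D" using has_derivative_linear[OF D] .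
  then have "D = (\<lambda>h. (\<Sum>b\<in>Basis. D b *\<^sub>R b) \<bullet> h)" by (rule lin_rep)
  then have D': "(f has_derivative (\<lambda>h. (\<Sum>b\<in>Basis. D b *\<^sub>R b) \<bullet> h)) (at x)" using D by simp
  then show ?thesis using grad_eq[OF D'] by simp
qed

lemma partial_x:
  fixes L :: "'a::euclidean_space \<times> 'b::euclidean_space \<Rightarrow> real"
  assumes "(L has_derivative (\<lambda>h. g \<bullet> h)) (at z)"
  shows "((\<lambda>x. L (x, snd z)) has_derivative (\<lambda>h. fst g \<bullet> h)) (at (fst z))"
proof -
  have p: "((\<lambda>x. (x, snd z)) has_derivative (\<lambda>h. (h, 0))) (at (fst z))"
    by (intro has_derivative_Pair has_derivative_ident has_derivative_const)
  have "(fst z, snd z) = z" by simp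
  then have "(L has_derivative (\<lambda>h. g \<bullet> h)) (at ((\<lambda>x. (x, snd z)) (fst z)))" using assms by simp
  from has_derivative_compose[OF p this]
  have "((\<lambda>x. L (x, snd z)) has_derivative (\<lambda>h. g \<bullet> (h, 0))) (at (fst z))" .
  moreover have "(\<lambda>h. g \<bullet> (h, 0)) = (\<lambda>h. fst g \<bullet> h)"
    by (rule ext) (metis inner_Pair inner_zero_right add.right_neutral prod.collapse)
  ultimately show ?thesis by simp
qed

lemma partial_y:
  fixes L :: "'a::euclidean_space \<times> 'b::euclidean_space \<Rightarrow> real"
  assumes "(L has_derivative (\<lambda>h. g \<bullet> h)) (at z)"
  shows "((\<lambda>y. L (fst z, y)) has_derivative (\<lambda>h. snd g \<bullet> h)) (at (snd z))"
proof -
  have p: "((\<lambda>y. (fst z, y)) has_derivative (\<lambda>h. (0, h))) (at (snd z))"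
    by (intro has_derivative_Pair has_derivative_ident has_derivative_const)
  have "(fst z, snd z) = z" by simp
  then have "(L has_derivative (\<lambda>h. g \<bullet> h)) (at ((\<lambda>y. (fst z, y)) (snd z)))" using assms by simp
  from has_derivative_compose[OF p this]
  have "((\<lambda>y. L (fst z, y)) has_derivative (\<lambda>h. g \<bullet> (0, h))) (at (snd z))" .
  moreover have "(\<lambda>h. g \<bullet> (0, h)) = (\<lambda>h. snd g \<bullet> h)"
    by (rule ext) (metis inner_Pair inner_zero_right add.left_neutral prod.collapse)
  ultimately show ?thesis by simp
qed

lemma saddle_op_grad:
  fixes L :: "'a::euclidean_space \<times> 'b::euclidean_space \<Rightarrow> real"
  assumes "L differentiable (at z)"
  shows "saddle_op L z = (fst (grad L z), - snd (grad L z))"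
    and "((\<lambda>x. L (x, snd z)) has_derivative (\<lambda>h. grad_x L z \<bullet> h)) (at (fst z))"
    and "((\<lambda>y. L (fst z, y)) has_derivative (\<lambda>h. grad_y L z \<bullet> h)) (at (snd z))"
proof -
  have D: "(L has_derivative (\<lambda>h. grad L z \<bullet> h)) (at z)" using grad_works[OF assms] .
  have gx: "grad_x L z = fst (grad L z)" unfolding grad_x_def using grad_eq[OF partial_x[OF D]] .
  have gy: "grad_y L z = snd (grad L z)" unfolding grad_y_def using grad_eq[OF partial_y[OF D]] .
  show "saddle_op L z = (fst (grad L z), - snd (grad L z))" unfolding saddle_op_def gx gy ..
  show "((\<lambda>x. L (x, snd z)) has_derivative (\<lambda>h. grad_x L z \<bullet> h)) (at (fst z))"
    unfolding gx by (rule partial_x[OF D])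
  show "((\<lambda>y. L (fst z, y)) has_derivative (\<lambda>h. grad_y L z \<bullet> h)) (at (snd z))"
    unfolding gy by (rule partial_y[OF D])
qed

lemma norm_saddle_op:
  fixes L :: "'a::euclidean_space \<times> 'b::euclidean_space \<Rightarrow> real"
  assumes "L differentiable (at z)"
  shows "norm (grad L z) = norm (saddle_op L z)"
  unfolding saddle_op_grad(1)[OF assms]
  by (metis norm_Pair norm_minus_cancel prod.collapse)

lemma convex_tangent:
  fixes f :: "'a::real_normed_vector \<Rightarrow> real"
  assumes cv: "convex_on UNIV f" and D: "(f has_derivative F) (at x)"
  shows "f y \<ge> f x + F (y - x)"
proof -
  define v where "v = y - x"
  define \<phi> where "\<phi> t = f (x + t *\<^sub>R v)" for t :: real
  have cphi: "convex_on UNIV \<phi>"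
  proof (rule convex_onI)
    fix t s u :: real assume t: "0 < t" "t < 1"
    have e: "x + ((1 - t) *\<^sub>R s + t *\<^sub>R u) *\<^sub>R v = (1 - t) *\<^sub>R (x + s *\<^sub>R v) + t *\<^sub>R (x + u *\<^sub>R v)"
      by (simp add: algebra_simps)
    show "\<phi> ((1 - t) *\<^sub>R s + t *\<^sub>R u) \<le> (1 - t) * \<phi> s + t * \<phi> u"
      unfolding \<phi>_def e using convex_onD[OF cv, of t] t by simp
  qed simp
  have l: "((\<lambda>t::real. x + t *\<^sub>R v) has_derivative (\<lambda>t. t *\<^sub>R v)) (at 0)"
    by (auto intro!: derivative_eq_intros)
  have "f (x + 0 *\<^sub>R v) = f x" by simp
  then have D0: "(f has_derivative F) (at ((\<lambda>t::real. x + t *\<^sub>R v) 0))" using D by simp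
  have "(\<phi> has_derivative (\<lambda>t. F (t *\<^sub>R v))) (at 0)"
    unfolding \<phi>_def using has_derivative_compose[OF l D0] by simp
  moreover have "(\<lambda>t. F (t *\<^sub>R v)) = (\<lambda>t. t * F v)"
    using linear_scale[OF has_derivative_linear[OF D]] by (simp add: fun_eq_iff)
  moreover have "(\<lambda>t. t * F v) = (*) (F v)" by (rule ext) (simp add: mult.commute)
  ultimately have "(\<phi> has_field_derivative F v) (at 0 within UNIV)"
    by (simp add: has_field_derivative_def)
  from convex_on_imp_above_tangent[OF cphi _ _ _ this, of 1]
  have "\<phi> 1 - \<phi> 0 \<ge> F v * (1 - 0)" by simp
  then show ?thesis unfolding \<phi>_def v_def by simp
qed

lemma concave_tangent:
  fixes f :: "'a::real_normed_vector \<Rightarrow> real"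
  assumes cv: "concave_on UNIV f" and D: "(f has_derivative F) (at x)"
  shows "f y \<le> f x + F (y - x)"
proof -
  have "convex_on UNIV (\<lambda>x. - f x)" using cv unfolding concave_on_def .
  moreover have "((\<lambda>x. - f x) has_derivative (\<lambda>h. - F h)) (at x)" using D by (rule has_derivative_minus)
  ultimately have "- f y \<ge> - f x + - F (y - x)" by (rule convex_tangent)
  then show ?thesis by simp
qed




lemma lyap_scalar:
  fixes n al al' R g1w g0w g1gh g0gh g0g0 g1g1 ghgh :: real
  assumes n: "n \<ge> 1" and al: "al > 0" and R: "R > 0" and r1: "al^2*R^2 < 1"
    and al': "al' = al * (1 - 1/(n*(n+2)) * (al^2*R^2/(1 - al^2*R^2)))"
    and M: "-(1/(n+1))*g1w + (1/(n+1))*g0w - al*g1gh + al*g0gh \<ge> 0"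
    and Lp: "R^2*al^2*(ghgh - 2*g0gh + g0g0) - (g1g1 - 2*g1gh + ghgh) \<ge> 0"
    and S: "n^2*(1-al^2*R^2)^2*ghgh + 2*n*(1-al^2*R^2)*((n+1)*(al^2*R^2)-n)*g1gh + ((n+1)*(al^2*R^2)-n)^2*g1g1 \<ge> 0"
  shows "al'*(n+1)*(n+2)*g1g1 + 2*(n+1)*(g1w - (1/(n+1))*g1w - al*g1gh) \<le> al*n*(n+1)*g0g0 + 2*n*g0w"
proof -
  define r2 where "r2 = al^2*R^2"
  define b where "b = 1/(n+1)"
  have hb: "b*(n+1) = 1" unfolding b_def using n by simp
  have r2p: "r2 > 0" unfolding r2_def using al R by simp
  have r2l: "1 - r2 > 0" using r1 unfolding r2_def by simp
  define Lv where "Lv = r2*(ghgh - 2*g0gh + g0g0) - (g1g1 - 2*g1gh + ghgh)"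
  define Sv where "Sv = n^2*(1-r2)^2*ghgh + 2*n*(1-r2)*((n+1)*r2-n)*g1gh + ((n+1)*r2-n)^2*g1g1"
  define Mv where "Mv = -n*g1w + n*g0w - n*(n+1)*al*g1gh + n*(n+1)*al*g0gh"
  have "n*(n+1)*(-b*g1w + b*g0w - al*g1gh + al*g0gh)
      = -n*(b*(n+1))*g1w + n*(b*(n+1))*g0w - n*(n+1)*al*g1gh + n*(n+1)*al*g0gh"
    by (simp add: algebra_simps)
  then have Mv_eq: "n*(n+1)*(-b*g1w + b*g0w - al*g1gh + al*g0gh) = Mv" unfolding hb Mv_def by simp
  have "n*(n+1)*(-b*g1w + b*g0w - al*g1gh + al*g0gh) \<ge> 0"
    using M n unfolding b_def by (intro mult_nonneg_nonneg) auto
  then have M': "Mv \<ge> 0" using Mv_eq by simp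
  have L': "Lv \<ge> 0" using Lp unfolding Lv_def r2_def by (simp add: power_mult_distrib mult.commute)
  have S': "Sv \<ge> 0" using S unfolding Sv_def r2_def .
  define E where "E = n*(n+2)*(1-r2)"
  have E0: "E > 0" unfolding E_def using n r2l by simp
  have al'': "al' = al * (1 - r2/E)" using assms(5) unfolding r2_def E_def by simp
  have "al'*E = al*E - al*(r2/E*E)" unfolding al'' by (simp add: algebra_simps)
  then have alE: "al'*E = al*E - al*r2" using E0 by simp
  define A2 where "A2 = al'*(n+1)*(n+2)"
  have KA: "r2*n*(1-r2)*A2 = r2*al*(n+1)*((n+1)^2*(1-r2) - 1)"
  proof -
    have "r2*n*(1-r2)*A2 = r2*(n+1)*(al'*E)" unfolding A2_def E_def by (simp add: algebra_simps)
    also have "\<dots> = r2*(n+1)*(al*E - al*r2)" unfolding alE ..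
    also have "\<dots> = r2*al*(n+1)*((n+1)^2*(1-r2) - 1)" unfolding E_def by (simp add: algebra_simps power2_eq_square)
    finally show ?thesis .
  qed
  define lhs where "lhs = al'*(n+1)*(n+2)*g1g1 + 2*(n+1)*(g1w - (1/(n+1))*g1w - al*g1gh)"
  define rhs where "rhs = al*n*(n+1)*g0g0 + 2*n*g0w"
  have lhs': "lhs = A2*g1g1 + 2*n*g1w - 2*(n+1)*al*g1gh"
  proof -
    have "lhs = A2*g1g1 + 2*(n+1)*g1w - 2*(b*(n+1))*g1w - 2*(n+1)*al*g1gh"
      unfolding lhs_def A2_def b_def[symmetric] by (simp add: algebra_simps)
    then show ?thesis unfolding hb by (simp add: algebra_simps)
  qed
  have "r2*n*(1-r2)*(rhs - lhs) = r2*n*(1-r2)*al*n*(n+1)*g0g0 + 2*r2*n*(1-r2)*(n*g0w - n*g1w + (n+1)*al*g1gh) - (r2*n*(1-r2)*A2)*g1g1"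
    unfolding lhs' rhs_def by (simp add: algebra_simps)
  also have "\<dots> = r2*n*(1-r2)*al*n*(n+1)*g0g0 + 2*r2*n*(1-r2)*(n*g0w - n*g1w + (n+1)*al*g1gh) - r2*al*(n+1)*((n+1)^2*(1-r2) - 1)*g1g1"
    unfolding KA ..
  also have "\<dots> = 2*r2*n*(1-r2)*Mv + al*n^2*(n+1)*(1-r2)*Lv + al*(n+1)*Sv"
    unfolding Mv_def Lv_def Sv_def by (simp add: algebra_simps power2_eq_square)
  finally have iden: "r2*n*(1-r2)*(rhs - lhs) = 2*r2*n*(1-r2)*Mv + al*n^2*(n+1)*(1-r2)*Lv + al*(n+1)*Sv" .
  have "0 \<le> 2*r2*n*(1-r2)*Mv + al*n^2*(n+1)*(1-r2)*Lv + al*(n+1)*Sv"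
    using M' L' S' n al r2p r2l by (intro add_nonneg_nonneg mult_nonneg_nonneg) auto
  then have "0 \<le> r2*n*(1-r2)*(rhs - lhs)" using iden by simp
  moreover have "r2*n*(1-r2) > 0" using r2p r2l n by simp
  ultimately have "rhs - lhs \<ge> 0" by (simp add: zero_le_mult_iff)
  then show ?thesis unfolding lhs_def rhs_def by simp
qed



lemma mono_G:
  fixes L :: "'a::euclidean_space \<times> 'b::euclidean_space \<Rightarrow> real"
  assumes cc: "convex_concave L" and diff: "\<And>z. L differentiable (at z)"
  shows "inner (saddle_op L z - saddle_op L z') (z - z') \<ge> 0"
proof -
  obtain x y where z: "z = (x, y)" by fastforce
  obtain x' y' where z': "z' = (x', y')" by fastforce
  have cx: "convex_on UNIV (\<lambda>x. L (x, y))" for y using cc unfolding convex_concave_def by blast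
  have cy: "concave_on UNIV (\<lambda>y. L (x, y))" for x using cc unfolding convex_concave_def by blast
  define gx where "gx = grad_x L z"
  define gy where "gy = grad_y L z"
  define gx' where "gx' = grad_x L z'"
  define gy' where "gy' = grad_y L z'"
  have Dx: "((\<lambda>x. L (x, y)) has_derivative (\<lambda>h. gx \<bullet> h)) (at x)"
    using saddle_op_grad(2)[OF diff[of z]] unfolding gx_def z by simp
  have Dy: "((\<lambda>y. L (x, y)) has_derivative (\<lambda>h. gy \<bullet> h)) (at y)"
    using saddle_op_grad(3)[OF diff[of z]] unfolding gy_def z by simp
  have Dx': "((\<lambda>x. L (x, y')) has_derivative (\<lambda>h. gx' \<bullet> h)) (at x')"
    using saddle_op_grad(2)[OF diff[of z']] unfolding gx'_def z' by simp
  have Dy': "((\<lambda>y. L (x', y)) has_derivative (\<lambda>h. gy' \<bullet> h)) (at y')"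
    using saddle_op_grad(3)[OF diff[of z']] unfolding gy'_def z' by simp
  have t1: "L (x', y) \<ge> L (x, y) + gx \<bullet> (x' - x)" using convex_tangent[OF cx Dx] by simp
  have t2: "L (x, y') \<ge> L (x', y') + gx' \<bullet> (x - x')" using convex_tangent[OF cx Dx'] by simp
  have t3: "L (x, y') \<le> L (x, y) + gy \<bullet> (y' - y)" using concave_tangent[OF cy Dy] by simp
  have t4: "L (x', y) \<le> L (x', y') + gy' \<bullet> (y - y')" using concave_tangent[OF cy Dy'] by simp
  have e: "inner (saddle_op L z - saddle_op L z') (z - z')
      = - (gx \<bullet> (x' - x)) - gx' \<bullet> (x - x') + gy \<bullet> (y' - y) + gy' \<bullet> (y - y')"
    unfolding saddle_op_def z z' gx_def gy_def gx'_def gy'_def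
    by (simp add: inner_diff_left inner_diff_right algebra_simps)
  show ?thesis unfolding e using t1 t2 t3 t4 by linarith
qed

lemma sp_G:
  fixes L :: "'a::euclidean_space \<times> 'b::euclidean_space \<Rightarrow> real"
  assumes cc: "convex_concave L" and diff: "\<And>z. L differentiable (at z)"
    and sp: "is_saddle_point L zs"
  shows "inner (saddle_op L z) (z - zs) \<ge> 0"
proof -
  obtain x y where z: "z = (x, y)" by fastforce
  obtain xs ys where zs: "zs = (xs, ys)" by fastforce
  have cx: "convex_on UNIV (\<lambda>x. L (x, y))" for y using cc unfolding convex_concave_def by blast
  have cy: "concave_on UNIV (\<lambda>y. L (x, y))" for x using cc unfolding convex_concave_def by blast
  define gx where "gx = grad_x L z"
  define gy where "gy = grad_y L z"
  have Dx: "((\<lambda>x. L (x, y)) has_derivative (\<lambda>h. gx \<bullet> h)) (at x)"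
    using saddle_op_grad(2)[OF diff[of z]] unfolding gx_def z by simp
  have Dy: "((\<lambda>y. L (x, y)) has_derivative (\<lambda>h. gy \<bullet> h)) (at y)"
    using saddle_op_grad(3)[OF diff[of z]] unfolding gy_def z by simp
  have t1: "L (xs, y) \<ge> L (x, y) + gx \<bullet> (xs - x)" using convex_tangent[OF cx Dx] by simp
  have t3: "L (x, ys) \<le> L (x, y) + gy \<bullet> (ys - y)" using concave_tangent[OF cy Dy] by simp
  have s1: "L (xs, y) \<le> L (xs, ys)" and s2: "L (xs, ys) \<le> L (x, ys)"
    using sp unfolding is_saddle_point_def zs by auto
  have e: "inner (saddle_op L z) (z - zs) = - (gx \<bullet> (xs - x)) + gy \<bullet> (ys - y)"
    unfolding saddle_op_def z zs gx_def gy_def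
    by (simp add: inner_diff_left inner_diff_right algebra_simps)
  show ?thesis unfolding e using t1 t3 s1 s2 by linarith
qed

lemma G_zs:
  fixes L :: "'a::euclidean_space \<times> 'b::euclidean_space \<Rightarrow> real"
  assumes cc: "convex_concave L" and diff: "\<And>z. L differentiable (at z)"
    and sp: "is_saddle_point L zs" and R: "R > 0" and lip: "R-lipschitz_on UNIV (saddle_op L)"
  shows "saddle_op L zs = 0"
proof -
  define G where "G = saddle_op L"
  define v where "v = G zs"
  define t where "t = 1/(2*R)"
  have t0: "t > 0" unfolding t_def using R by simp
  define z where "z = zs - t *\<^sub>R v"
  have "inner (G z) (z - zs) \<ge> 0" unfolding G_def using sp_G[OF cc diff sp] .
  then have "- t * inner (G z) v \<ge> 0" unfolding z_def by simp
  then have a: "inner (G z) v \<le> 0" using t0 by (simp add: mult_le_0_iff)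
  have "dist (G zs) (G z) \<le> R * dist zs z" unfolding G_def using lipschitz_onD[OF lip] by simp
  then have b: "norm (G zs - G z) \<le> R * (t * norm v)" unfolding z_def dist_norm using t0 by simp
  have "inner (G zs - G z) v \<le> norm (G zs - G z) * norm v" by (rule norm_cauchy_schwarz)
  also have "\<dots> \<le> R * (t * norm v) * norm v" using b by (simp add: mult_right_mono)
  also have "\<dots> = (norm v)^2 / 2" unfolding t_def using R by (simp add: power2_eq_square)
  finally have c: "inner (G zs - G z) v \<le> (norm v)^2 / 2" .
  have "inner v v = inner (G zs - G z) v + inner (G z) v" unfolding v_def by (simp add: inner_diff_left)
  then have "(norm v)^2 \<le> (norm v)^2 / 2" using a c by (simp add: power2_norm_eq_inner)
  then have "norm v = 0" by simp
  then show ?thesis unfolding v_def G_def by simp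
qed

lemma final_scalar:
  fixes u v a n :: real
  assumes n: "n \<ge> 1" and u: "u \<ge> 0" and v: "v \<ge> 0" and a: "a \<ge> 435/1000"
    and h: "a*n*(n+1)*u^2 - 2*n*u* v \<le> 1236/1000* v^2"
  shows "u^2 \<le> 27* v^2/(n*(n+1))"
proof -
  define p1 where "p1 = a^2*(n+1)*(n*(n+1)*u^2)"
  define p2 where "p2 = a*n*(n+1)*u* v"
  define p3 where "p3 = a*(n+1)* v^2"
  define p4 where "p4 = n* v^2"
  have h2: "a*n*(n+1)*u^2 \<le> 2*n*u* v + 1236/1000* v^2" using h by linarith
  have "2*a*(n+1)*(a*n*(n+1)*u^2) \<le> 2*a*(n+1)*(2*n*u* v + 1236/1000* v^2)"
    using a n by (intro mult_left_mono[OF h2]) auto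
  moreover have "2*a*(n+1)*(a*n*(n+1)*u^2) = 2*p1" unfolding p1_def by (simp add: algebra_simps power2_eq_square)
  moreover have "2*a*(n+1)*(2*n*u* v + 1236/1000* v^2) = 4*p2 + 2472/1000*p3"
    unfolding p2_def p3_def by (simp add: algebra_simps power2_eq_square)
  ultimately have m: "2*p1 \<le> 4*p2 + 2472/1000*p3" by simp
  have "0 \<le> n*(a*(n+1)*u - 2* v)^2" using n by simp
  moreover have "n*(a*(n+1)*u - 2* v)^2 = p1 - 4*p2 + 4*p4"
    unfolding p1_def p2_def p4_def by (simp add: algebra_simps power2_eq_square)
  ultimately have sq: "0 \<le> p1 - 4*p2 + 4*p4" by simp
  have k: "p1 \<le> 4*p4 + 2472/1000*p3" using m sq by linarith
  have "p4 \<le> (n+1)* v^2" unfolding p4_def using v by (simp add: mult_right_mono)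
  have "a*a \<ge> 435/1000*a" using a by (intro mult_right_mono) auto
  then have a2: "4 + 2472/1000*a \<le> 27*a^2" using a unfolding power2_eq_square by linarith
  have "4*p4 + 2472/1000*p3 \<le> (n+1)* v^2*(4 + 2472/1000*a)"
    using \<open>p4 \<le> (n+1)* v^2\<close> unfolding p3_def by (simp add: algebra_simps)
  also have "\<dots> \<le> (n+1)* v^2*(27*a^2)" using a2 n by (intro mult_left_mono) auto
  finally have "p1 \<le> (n+1)* v^2*(27*a^2)" using k by linarith
  then have "(a^2*(n+1))*(n*(n+1)*u^2) \<le> (a^2*(n+1))*(27* v^2)" unfolding p1_def by (simp add: algebra_simps)
  moreover have "a^2*(n+1) > 0" using a n by simp
  ultimately have "n*(n+1)*u^2 \<le> 27* v^2" by (rule mult_left_le_imp_le)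
  moreover have "n*(n+1) > 0" using n by simp
  ultimately show ?thesis by (simp add: pos_le_divide_eq mult.commute)
qed




theorem corollary2:
  fixes L :: "(real ^ 'n) \<times> (real ^ 'm) \<Rightarrow> real"
    and R :: real
    and zs z0 :: "(real ^ 'n) \<times> (real ^ 'm)"
    and \<alpha> :: "nat \<Rightarrow> real"
    and z zh :: "nat \<Rightarrow> (real ^ 'n) \<times> (real ^ 'm)"
  assumes R_pos: "R > 0"
    and smooth: "smooth_cc R L"
    and cc: "convex_concave L"
    and saddle: "is_saddle_point L zs"
    and alpha0: "\<alpha> 0 = (618 / 1000) / R"
    and alphaS: "\<And>k. \<alpha> (Suc k) = \<alpha> k * (1 - 1 / ((real k + 1) * (real k + 3))
                     * (\<alpha> k ^ 2 * R ^ 2 / (1 - \<alpha> k ^ 2 * R ^ 2)))"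
    and z_0: "z 0 = z0"
    and zh_def: "\<And>k. zh k = z k + (1 / (real k + 2)) *\<^sub>R (z0 - z k) - \<alpha> k *\<^sub>R saddle_op L (z k)"
    and zS: "\<And>k. z (Suc k) = z k + (1 / (real k + 2)) *\<^sub>R (z0 - z k) - \<alpha> k *\<^sub>R saddle_op L (zh k)"
  shows "\<forall>k. norm (grad L (z k)) ^ 2
           \<le> 27 * R ^ 2 * norm (z0 - zs) ^ 2 / ((real k + 1) * (real k + 2))"
proof -
  have diff: "\<And>z. L differentiable (at z)" and lip: "R-lipschitz_on UNIV (saddle_op L)"
    using smooth unfolding smooth_cc_def by auto
  define G where "G = saddle_op L"
  define a where "a k = \<alpha> k * R" for k
  have a0: "a 0 = 618/1000" using alpha0 R_pos unfolding a_def by simp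
  have aS': "a (Suc k) = a k * (1 - 1/((real k+1)*(real k+3)) * (a k^2/(1 - a k^2)))" for k
    unfolding a_def alphaS[of k] by (simp add: power_mult_distrib mult.commute mult.left_commute)
  have ab: "435/1000 \<le> a k \<and> a k \<le> 618/1000" for k using a_bounds[of a, OF a0 aS'] .
  have alpos: "\<alpha> k > 0" for k
  proof -
    have "\<alpha> k * R > 0" using ab[of k] unfolding a_def by simp
    then show ?thesis using R_pos by (simp add: zero_less_mult_iff)
  qed
  have ar: "\<alpha> k ^ 2 * R ^ 2 < 1" for k
  proof -
    have "(\<alpha> k * R)^2 < 1" using ab[of k] alpos[of k] R_pos unfolding a_def
      by (intro sq_lt1) auto
    then show ?thesis by (simp add: power_mult_distrib)
  qed
  define V where "V k = \<alpha> k * (real k + 1) * (real k + 2) * (norm (G (z k)))^2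
      + 2 * (real k + 1) * inner (G (z k)) (z k - z0)" for k
  have step: "V (Suc k) \<le> V k" for k
  proof -
    define n where "n = real k + 1"
    define b where "b = 1/(n+1)"
    define w where "w = z k - z0"
    define g0 where "g0 = G (z k)"
    define gh where "gh = G (zh k)"
    define g1 where "g1 = G (z (Suc k))"
    have n1: "n \<ge> 1" unfolding n_def by simp
    have bk: "1/(real k + 2) = b" unfolding b_def n_def by simp
    have e1: "z (Suc k) - z k = - b *\<^sub>R w - \<alpha> k *\<^sub>R gh"
      unfolding zS bk w_def gh_def G_def by (simp add: algebra_simps)
    have e2: "z (Suc k) - z0 = w - b *\<^sub>R w - \<alpha> k *\<^sub>R gh"
      unfolding zS bk w_def gh_def G_def by (simp add: algebra_simps)
    have e3: "z (Suc k) - zh k = \<alpha> k *\<^sub>R (g0 - gh)"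
      unfolding zS zh_def bk g0_def gh_def G_def by (simp add: algebra_simps)
    have M0: "inner (g1 - g0) (z (Suc k) - z k) \<ge> 0"
      unfolding g1_def g0_def G_def by (rule mono_G[OF cc diff])
    have Mexp: "inner (g1 - g0) (- b *\<^sub>R w - \<alpha> k *\<^sub>R gh)
        = - b * inner g1 w + b * inner g0 w - \<alpha> k * inner g1 gh + \<alpha> k * inner g0 gh"
      by (simp add: inner_diff_left inner_diff_right inner_add_right algebra_simps)
    have M: "- (1/(n+1)) * inner g1 w + (1/(n+1)) * inner g0 w - \<alpha> k * inner g1 gh + \<alpha> k * inner g0 gh \<ge> 0"
      using M0 unfolding e1 Mexp unfolding b_def .
    have "dist (G (z (Suc k))) (G (zh k)) \<le> R * dist (z (Suc k)) (zh k)"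
      unfolding G_def using lipschitz_onD[OF lip] by simp
    then have "norm (g1 - gh) \<le> R * norm (z (Suc k) - zh k)" unfolding g1_def gh_def dist_norm .
    also have "\<dots> = R * \<alpha> k * norm (g0 - gh)" unfolding e3 using alpos[of k] by simp
    finally have "(norm (g1 - gh))^2 \<le> (R * \<alpha> k * norm (g0 - gh))^2"
      by (intro power_mono) auto
    moreover have "(norm (g1 - gh))^2 = inner g1 g1 - 2 * inner g1 gh + inner gh gh"
      by (simp add: power2_norm_eq_inner inner_diff_left inner_diff_right inner_commute[of gh g1])
    moreover have "(norm (g0 - gh))^2 = inner g0 g0 - 2 * inner g0 gh + inner gh gh"
      by (simp add: power2_norm_eq_inner inner_diff_left inner_diff_right inner_commute[of gh g0])
    ultimately have Lp0: "inner g1 g1 - 2 * inner g1 gh + inner gh gh \<le> R^2 * \<alpha> k^2 * (inner g0 g0 - 2 * inner g0 gh + inner gh gh)"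
      by (simp add: power_mult_distrib)
    have eqs: "inner gh gh - 2 * inner g0 gh + inner g0 g0 = inner g0 g0 - 2 * inner g0 gh + inner gh gh" by simp
    have Lp: "R^2 * \<alpha> k^2 * (inner gh gh - 2 * inner g0 gh + inner g0 g0)
        - (inner g1 g1 - 2 * inner g1 gh + inner gh gh) \<ge> 0"
      unfolding eqs using Lp0 by linarith
    define c1 where "c1 = n * (1 - \<alpha> k^2 * R^2)"
    define c2 where "c2 = (n+1) * (\<alpha> k^2 * R^2) - n"
    have "0 \<le> (norm (c1 *\<^sub>R gh + c2 *\<^sub>R g1))^2" by simp
    also have "\<dots> = inner (c1 *\<^sub>R gh + c2 *\<^sub>R g1) (c1 *\<^sub>R gh + c2 *\<^sub>R g1)"
      by (rule power2_norm_eq_inner)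
    also have "\<dots> = c1^2 * inner gh gh + 2 * c1 * c2 * inner g1 gh + c2^2 * inner g1 g1"
      by (simp add: inner_add_left inner_add_right inner_commute[of gh g1]
          algebra_simps power2_eq_square)
    finally have S: "n^2*(1-\<alpha> k^2*R^2)^2*inner gh gh + 2*n*(1-\<alpha> k^2*R^2)*((n+1)*(\<alpha> k^2*R^2)-n)*inner g1 gh
        + ((n+1)*(\<alpha> k^2*R^2)-n)^2*inner g1 g1 \<ge> 0"
      unfolding c1_def c2_def by (simp add: power_mult_distrib mult.assoc)
    have al': "\<alpha> (Suc k) = \<alpha> k * (1 - 1/(n*(n+2)) * (\<alpha> k^2*R^2/(1 - \<alpha> k^2*R^2)))"
      unfolding alphaS n_def by (simp add: add.assoc)
    have key: "\<alpha> (Suc k)*(n+1)*(n+2)*inner g1 g1 + 2*(n+1)*(inner g1 w - (1/(n+1))*inner g1 w - \<alpha> k*inner g1 gh)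
        \<le> \<alpha> k*n*(n+1)*inner g0 g0 + 2*n*inner g0 w"
      by (rule lyap_scalar[OF n1 alpos R_pos ar al' M Lp S])
    have V1: "V (Suc k) = \<alpha> (Suc k)*(n+1)*(n+2)*inner g1 g1 + 2*(n+1)*(inner g1 w - (1/(n+1))*inner g1 w - \<alpha> k*inner g1 gh)"
      unfolding V_def e2 g1_def[symmetric] b_def
      by (simp add: n_def power2_norm_eq_inner inner_diff_right add.assoc add.commute)
    have V0: "V k = \<alpha> k*n*(n+1)*inner g0 g0 + 2*n*inner g0 w"
      unfolding V_def g0_def[symmetric] w_def[symmetric]
      by (simp add: n_def power2_norm_eq_inner add.assoc add.commute)
    show ?thesis unfolding V1 V0 using key .
  qed
  have Vle: "V k \<le> V 0" for k
  proof (induction k)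
    case (Suc k) then show ?case using step[of k] by linarith
  qed simp
  define D where "D = norm (z0 - zs)"
  have Gzs: "G zs = 0" unfolding G_def using G_zs[OF cc diff saddle R_pos lip] .
  have "dist (G z0) (G zs) \<le> R * dist z0 zs" unfolding G_def using lipschitz_onD[OF lip] by simp
  then have Gz0: "norm (G z0) \<le> R * D" unfolding Gzs D_def dist_norm by simp
  have "V 0 = 2 * \<alpha> 0 * (norm (G z0))^2" unfolding V_def z_0 by simp
  also have "\<dots> \<le> 2 * \<alpha> 0 * (R * D)^2"
    using Gz0 alpos[of 0] by (intro mult_left_mono power_mono) auto
  also have "\<dots> = 1236/1000 * R * D^2" unfolding alpha0 using R_pos by (simp add: power2_eq_square)
  finally have V0b: "V 0 \<le> 1236/1000 * R * D^2" .
  show ?thesis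
  proof
    fix k
    define n where "n = real k + 1"
    define u where "u = norm (G (z k))"
    have n1: "n \<ge> 1" unfolding n_def by simp
    have "inner (G (z k)) (z k - zs) \<ge> 0" unfolding G_def by (rule sp_G[OF cc diff saddle])
    moreover have "inner (G (z k)) (z0 - zs) \<le> u * D" unfolding u_def D_def by (rule norm_cauchy_schwarz)
    moreover have "inner (G (z k)) (z k - z0) = inner (G (z k)) (z k - zs) - inner (G (z k)) (z0 - zs)"
      by (simp add: inner_diff_right)
    ultimately have ip: "inner (G (z k)) (z k - z0) \<ge> - (u * D)" by linarith
    have Vk: "V k = \<alpha> k * n * (n+1) * u^2 + 2 * n * inner (G (z k)) (z k - z0)"
      unfolding V_def u_def[symmetric] by (simp add: n_def add.assoc add.commute)
    have "2 * n * (- (u * D)) \<le> 2 * n * inner (G (z k)) (z k - z0)"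
      using ip n1 by (intro mult_left_mono) auto
    then have "\<alpha> k * n * (n+1) * u^2 + 2 * n * (- (u * D)) \<le> V k" unfolding Vk by linarith
    then have h0: "\<alpha> k * n * (n+1) * u^2 - 2 * n * (u * D) \<le> 1236/1000 * R * D^2"
      using Vle[of k] V0b by simp
    have "R * (\<alpha> k * n * (n+1) * u^2 - 2 * n * (u * D)) \<le> R * (1236/1000 * R * D^2)"
      using h0 R_pos by (intro mult_left_mono) auto
    then have h: "a k * n * (n+1) * u^2 - 2 * n * u * (R * D) \<le> 1236/1000 * (R * D)^2"
      unfolding a_def by (simp add: algebra_simps power2_eq_square)
    have "u^2 \<le> 27 * (R * D)^2 / (n * (n+1))"
      using final_scalar[OF n1 _ _ _ h] ab[of k] R_pos unfolding u_def D_def by simp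
    moreover have "norm (grad L (z k)) = u" unfolding u_def G_def using norm_saddle_op[OF diff] .
    ultimately show "norm (grad L (z k)) ^ 2 \<le> 27 * R ^ 2 * norm (z0 - zs) ^ 2 / ((real k + 1) * (real k + 2))"
      unfolding n_def D_def by (simp add: power_mult_distrib add.assoc)
  qed
qed

end
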